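(* Assume the subgraph $\mathcal G_{\sigma(t)}$ is undirected for all $t\ge0$. Then for all $t\ge0$, every nonzero eigenvalue of $\mathcal H_{\sigma(t)}\in\mathbb{R}^{N\times N}$ is not less than $\lambda_H=\frac{4}{N(N^2-N+4)}$.
   Context: $\sigma:[0,\infty)\to\mathcal P=\{1,\dots,n_0\}$ is a piecewise constant switching signal. For each $p\in\mathcal P$, $\bar{\mathcal G}_p$ is a graph on nodes $\{0,1,\dots,N\}$ with edge set $\bar{\mathcal E}_p$ of ordered pairs $(j,i)$, $j\ne i$; $a_{ij}(t)=1$ if $(j,i)\in\bar{\mathcal E}_{\sigma(t)}$, else $0$. $\mathcal G_{\sigma(t)}$ is the subgraph on $\{1,\dots,N\}$ with the edges of $\bar{\mathcal E}_{\sigma(t)}$ among those nodes (undirected: $(i,j)$ edge iff $(j,i)$ edge), with Laplacian $\mathcal L_{\sigma(t)}$ ($l_{ii}=\sum_{j=1}^Na_{ij}(t)$, $l_{ij}=-a_{ij}(t)$, $i\ne j$). $\Delta_{\sigma(t)}=\mathrm{diag}(a_{10}(t),\dots,a_{N0}(t))$ and $\mathcal H_{\sigma(t)}=\mathcal L_{\sigma(t)}+\Delta_{\sigma(t)}$ (the leader-follower matrix). *)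

theory Defs
  imports "HOL-Analysis.Analysis" "Jordan_Normal_Form.Char_Poly"
begin

definition piecewise_constant :: "(real \<Rightarrow> nat) \<Rightarrow> bool" where
  "piecewise_constant \<sigma> \<longleftrightarrow>
     (\<exists>ts :: nat \<Rightarrow> real. ts 0 = 0 \<and> strict_mono ts \<and> filterlim ts at_top sequentially \<and>
        (\<forall>k. \<forall>t. ts k \<le> t \<and> t < ts (Suc k) \<longrightarrow> \<sigma> t = \<sigma> (ts k)))"

definition adj :: "(nat \<times> nat) set \<Rightarrow> nat \<Rightarrow> nat \<Rightarrow> real" where
  "adj E i j = (if (j, i) \<in> E then 1 else 0)"

text \<open>Leader-follower matrix H = L + Delta of the graph with edge set E on nodes {0..N};
  row/column index k < N of the matrix corresponds to follower node k+1.\<close>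
definition laplacian_mat :: "nat \<Rightarrow> (nat \<times> nat) set \<Rightarrow> real mat" where
  "laplacian_mat N E = mat N N (\<lambda>(i, j).
      if i = j then (\<Sum>l = 1..N. adj E (i+1) l) else - adj E (i+1) (j+1))"

definition leader_diag :: "nat \<Rightarrow> (nat \<times> nat) set \<Rightarrow> real mat" where
  "leader_diag N E = mat N N (\<lambda>(i, j). if i = j then adj E (i+1) 0 else 0)"

definition H_mat :: "nat \<Rightarrow> (nat \<times> nat) set \<Rightarrow> real mat" where
  "H_mat N E = laplacian_mat N E + leader_diag N E"

end

theory Submission
  imports Defs "HOL-Library.Transitive_Closure_Table"
begin


lemma rtrancl_path_last': "rtrancl_path r x xs y \<Longrightarrow> (x # xs) ! length xs = y"
  by (induction rule: rtrancl_path.induct) auto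

lemma path_edges:
  fixes a :: "nat \<Rightarrow> nat \<Rightarrow> real" and w :: "nat \<Rightarrow> real"
  assumes sym: "\<forall>i<N. \<forall>j<N. a i j = a j i" and nn: "\<forall>i j. a i j \<ge> 0"
    and pN: "\<forall>s\<le>l. p s < N" and inj: "inj_on p {..l}"
    and st: "\<forall>s<l. a (p s) (p (Suc s)) = 1"
  shows "(\<Sum>t<l. (w (p t) - w (p (Suc t)))\<^sup>2) \<le> (\<Sum>i<N. \<Sum>j<N. a i j * (w i - w j)\<^sup>2) / 2"
proof -
  define f where "f = (\<lambda>(x,y). a x y * (w x - w y)\<^sup>2)"
  define P where "P = (\<lambda>s. (p s, p (Suc s))) ` {..<l}"
  define P' where "P' = (\<lambda>s. (p (Suc s), p s)) ` {..<l}"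
  have injP: "inj_on (\<lambda>s. (p s, p (Suc s))) {..<l}"
    using inj unfolding inj_on_def by auto
  have injP': "inj_on (\<lambda>s. (p (Suc s), p s)) {..<l}"
    using inj unfolding inj_on_def by auto
  have disj: "P \<inter> P' = {}"
  proof (rule ccontr)
    assume "P \<inter> P' \<noteq> {}"
    then obtain s t where s: "s < l" "t < l" "p s = p (Suc t)" "p (Suc s) = p t"
      unfolding P_def P'_def by auto
    then have "s = Suc t" "Suc s = t" using inj unfolding inj_on_def by auto
    then show False by simp
  qed
  have e1: "sum f P = (\<Sum>t<l. (w (p t) - w (p (Suc t)))\<^sup>2)"
    unfolding P_def by (subst sum.reindex[OF injP]) (auto simp: f_def st intro!: sum.cong)
  have e2: "sum f P' = (\<Sum>t<l. (w (p t) - w (p (Suc t)))\<^sup>2)"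
  proof -
    have "sum f P' = (\<Sum>t<l. a (p (Suc t)) (p t) * (w (p (Suc t)) - w (p t))\<^sup>2)"
      unfolding P'_def by (subst sum.reindex[OF injP']) (auto simp: f_def)
    also have "\<dots> = (\<Sum>t<l. (w (p t) - w (p (Suc t)))\<^sup>2)"
    proof (rule sum.cong)
      fix t assume "t \<in> {..<l}"
      then have "a (p (Suc t)) (p t) = 1" using st sym pN by auto
      then show "a (p (Suc t)) (p t) * (w (p (Suc t)) - w (p t))\<^sup>2 = (w (p t) - w (p (Suc t)))\<^sup>2"
        by (simp add: power2_commute)
    qed simp
    finally show ?thesis .
  qed
  have sub: "P \<union> P' \<subseteq> {..<N} \<times> {..<N}"
    unfolding P_def P'_def using pN by auto
  have "sum f (P \<union> P') \<le> sum f ({..<N} \<times> {..<N})"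
    by (rule sum_mono2) (use sub nn in \<open>auto simp: f_def\<close>)
  moreover have "sum f (P \<union> P') = sum f P + sum f P'"
    by (rule sum.union_disjoint[OF _ _ disj]) (auto simp: P_def P'_def)
  moreover have "sum f ({..<N} \<times> {..<N}) = (\<Sum>i<N. \<Sum>j<N. a i j * (w i - w j)\<^sup>2)"
    by (simp add: sum.cartesian_product f_def)
  ultimately show ?thesis using e1 e2 by linarith
qed

lemma tele_sq:
  fixes w :: "nat \<Rightarrow> real"
  assumes "s \<le> l"
  shows "(w (p s) - w (p l))\<^sup>2 \<le> real (l - s) * (\<Sum>t<l. (w (p t) - w (p (Suc t)))\<^sup>2)"
proof -
  have "w (p s) - w (p l) = (\<Sum>t = s..<l. (\<lambda>t. - w (p t)) (Suc t) - (\<lambda>t. - w (p t)) t)"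
    by (subst sum_Suc_diff'[OF assms]) simp
  also have "\<dots> = (\<Sum>t = s..<l. w (p t) - w (p (Suc t)))" by simp
  finally have eq: "w (p s) - w (p l) = (\<Sum>t = s..<l. w (p t) - w (p (Suc t)))" .
  have "(w (p s) - w (p l))\<^sup>2 \<le> (\<Sum>t = s..<l. (w (p t) - w (p (Suc t)))\<^sup>2) * card {s..<l}"
    unfolding eq by (rule sum_squared_le_sum_of_squares)
  also have "\<dots> \<le> (\<Sum>t<l. (w (p t) - w (p (Suc t)))\<^sup>2) * real (l - s)"
    by (simp only: card_atLeastLessThan, rule mult_right_mono) (auto intro!: sum_mono2)
  finally show ?thesis by (simp add: mult.commute)
qed

lemma quad_id:
  fixes a :: "nat \<Rightarrow> nat \<Rightarrow> real" and w :: "nat \<Rightarrow> real"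
  assumes sym: "\<forall>i<N. \<forall>j<N. a i j = a j i"
  shows "(\<Sum>i<N. w i * (\<Sum>j<N. a i j * (w i - w j))) = (\<Sum>i<N. \<Sum>j<N. a i j * (w i - w j)\<^sup>2) / 2"
proof -
  define X where "X = (\<Sum>i<N. \<Sum>j<N. a i j * w i * (w i - w j))"
  have X1: "(\<Sum>i<N. w i * (\<Sum>j<N. a i j * (w i - w j))) = X"
    unfolding X_def by (simp add: sum_distrib_left mult.assoc mult.left_commute)
  have "X = (\<Sum>j<N. \<Sum>i<N. a i j * w i * (w i - w j))" unfolding X_def by (rule sum.swap)
  also have "\<dots> = (\<Sum>i<N. \<Sum>j<N. a i j * w j * (w j - w i))"
    using sym by (auto intro!: sum.cong)
  finally have X2: "X = (\<Sum>i<N. \<Sum>j<N. a i j * w j * (w j - w i))" .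
  have "X + X = (\<Sum>i<N. \<Sum>j<N. a i j * w i * (w i - w j) + a i j * w j * (w j - w i))"
    unfolding X_def using X2 X_def by (simp add: sum.distrib)
  also have "\<dots> = (\<Sum>i<N. \<Sum>j<N. a i j * (w i - w j)\<^sup>2)"
    by (auto intro!: sum.cong simp: power2_eq_square algebra_simps)
  finally show ?thesis using X1 by simp
qed

lemma lap_zero:
  fixes a :: "nat \<Rightarrow> nat \<Rightarrow> real" and w :: "nat \<Rightarrow> real"
  assumes sym: "\<forall>i<N. \<forall>j<N. a i j = a j i"
  shows "(\<Sum>i<N. \<Sum>j<N. a i j * (w i - w j)) = 0"
proof -
  have "(\<Sum>i<N. \<Sum>j<N. a i j * w j) = (\<Sum>j<N. \<Sum>i<N. a i j * w j)" by (rule sum.swap)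
  also have "\<dots> = (\<Sum>i<N. \<Sum>j<N. a i j * w i)" using sym by (auto intro!: sum.cong)
  finally have "(\<Sum>i<N. \<Sum>j<N. a i j * w j) = (\<Sum>i<N. \<Sum>j<N. a i j * w i)" .
  then show ?thesis by (simp add: right_diff_distrib sum_subtractf)
qed

lemma sq_shift:
  fixes x y T :: real
  assumes "x\<^sup>2 \<le> real n * T" "T \<ge> 0"
  shows "(x + y)\<^sup>2 \<le> real (n + 1) * (T + y\<^sup>2)"
proof (cases "n = 0")
  case True
  then have "x = 0" using assms by simp
  then show ?thesis using True assms by simp
next
  case False
  then have n: "real n > 0" by simp
  have "x\<^sup>2 / real n \<le> T" using assms n by (simp add: divide_simps mult.commute)
  moreover have "0 \<le> (x - real n * y)\<^sup>2 / real n" using n by simp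
  moreover have "(x - real n * y)\<^sup>2 / real n = x\<^sup>2 / real n - 2 * x * y + real n * y\<^sup>2"
    using n by (simp add: power2_eq_square field_simps)
  ultimately have "2 * x * y \<le> T + real n * y\<^sup>2" by linarith
  then have "(x + y)\<^sup>2 \<le> x\<^sup>2 + T + real n * y\<^sup>2 + y\<^sup>2" by (simp add: power2_eq_square algebra_simps)
  also have "\<dots> \<le> real n * T + T + real n * y\<^sup>2 + y\<^sup>2" using assms by simp
  finally show ?thesis by (simp add: algebra_simps)
qed

lemma gauss_rev: "(\<Sum>s\<le>l. real (l - s + 1)) = real (l + 1) * real (l + 2) / 2"
proof (induction l)
  case 0 then show ?case by simp
next
  case (Suc l)
  have "(\<Sum>s\<le>Suc l. real (Suc l - s + 1)) = (\<Sum>s\<le>l. real (l - s + 1) + 1) + 1"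
    by (simp add: Suc_diff_le)
  also have "\<dots> = real (l + 1) * real (l + 2) / 2 + real (l+1) + 1"
    using Suc by (simp add: sum.distrib)
  finally show ?case by (simp add: field_simps)
qed

lemma get_path:
  assumes "R\<^sup>*\<^sup>* x y" "\<forall>u v. R u v \<longrightarrow> u < N \<and> v < N" "x < N"
  obtains p l where "p 0 = x" "p l = y" "\<forall>s<l. R (p s) (p (Suc s))" "\<forall>s\<le>l. p s < N"
    "inj_on p {..l}" "l + 1 \<le> N"
proof -
  from assms(1) obtain xs0 where xs0: "rtrancl_path R x xs0 y"
    unfolding rtranclp_eq_rtrancl_path by blast
  obtain xs where xs: "rtrancl_path R x xs y" "distinct (x # xs)" "set xs \<subseteq> set xs0"
    by (rule rtrancl_path_distinct[OF xs0])
  define p where "p = (\<lambda>s. (x # xs) ! s)"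
  define l where "l = length xs"
  have st: "\<forall>s<l. R (p s) (p (Suc s))"
  proof (intro allI impI)
    fix s assume "s < l"
    then have "R ((x # xs) ! s) (xs ! s)" using rtrancl_path_nth[OF xs(1)] by (simp add: l_def)
    then show "R (p s) (p (Suc s))" by (simp add: p_def)
  qed
  have pN: "\<forall>s\<le>l. p s < N"
  proof (intro allI impI)
    fix s assume sl: "s \<le> l"
    show "p s < N"
    proof (cases s)
      case 0 then show ?thesis using assms(3) by (simp add: p_def)
    next
      case (Suc t)
      then have "t < l" using sl by simp
      then have "R (p t) (p (Suc t))" using st by blast
      then show ?thesis using assms(2) Suc by blast
    qed
  qed
  have inj: "inj_on p {..l}"
  proof (rule inj_onI)
    fix s t assume "s \<in> {..l}" "t \<in> {..l}" "p s = p t"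
    then have "s < length (x # xs)" "t < length (x # xs)" "(x # xs) ! s = (x # xs) ! t"
      by (auto simp: l_def p_def)
    then show "s = t" using nth_eq_iff_index_eq[OF xs(2)] by blast
  qed
  have "card (p ` {..l}) = l + 1" using card_image[OF inj] by simp
  moreover have "card (p ` {..l}) \<le> card {..<N}" by (rule card_mono) (use pN in auto)
  ultimately have lN: "l + 1 \<le> N" by simp
  have p0: "p 0 = x" by (simp add: p_def)
  have pl: "p l = y" using rtrancl_path_last'[OF xs(1)] by (simp add: p_def l_def)
  show ?thesis by (rule that[OF p0 pl st pN inj lN])
qed

lemma core:
  fixes N :: nat and a :: "nat \<Rightarrow> nat \<Rightarrow> real" and d v :: "nat \<Rightarrow> real" and \<mu> :: real
  assumes a01: "\<forall>i j. a i j = 0 \<or> a i j = 1"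
    and sym: "\<forall>i<N. \<forall>j<N. a i j = a j i"
    and d01: "\<forall>i. d i = 0 \<or> d i = 1"
    and eig: "\<forall>i<N. \<mu> * v i = (\<Sum>j<N. a i j * (v i - v j)) + d i * v i"
    and nz: "\<exists>i<N. v i \<noteq> 0" and mu: "\<mu> \<noteq> 0"
  shows "4 / (real N * (real N ^ 2 - real N + 4)) \<le> \<mu>"
proof -
  have ann: "\<forall>i j. a i j \<ge> 0" using a01 by (metis order.refl zero_le_one)
  have dnn: "\<forall>i. d i \<ge> 0" using d01 by (metis order.refl zero_le_one)
  have Nne: "{..<N} \<noteq> {}" using nz by auto
  define M where "M = Max ((\<lambda>j. \<bar>v j\<bar>) ` {..<N})"
  have "M \<in> (\<lambda>j. \<bar>v j\<bar>) ` {..<N}" unfolding M_def by (rule Max_in) (use Nne in auto)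
  then obtain i0 where i0: "i0 < N" "\<bar>v i0\<bar> = M" by auto
  have vmax: "\<forall>j<N. \<bar>v j\<bar> \<le> \<bar>v i0\<bar>" unfolding i0(2) M_def by auto
  have vi0: "v i0 \<noteq> 0"
  proof -
    obtain i where "i < N" "v i \<noteq> 0" using nz by blast
    then have "\<bar>v i\<bar> \<le> \<bar>v i0\<bar>" "\<bar>v i\<bar> > 0" using vmax by auto
    then show ?thesis by auto
  qed
  define R where "R = (\<lambda>x y. x < N \<and> y < N \<and> a x y = 1)"
  have RN: "\<forall>u v. R u v \<longrightarrow> u < N \<and> v < N" unfolding R_def by auto
  define C where "C = {j. j < N \<and> R\<^sup>*\<^sup>* i0 j}"
  have i0C: "i0 \<in> C" using i0 by (simp add: C_def)
  have clos1: "\<And>j l. j \<in> C \<Longrightarrow> l < N \<Longrightarrow> a j l \<noteq> 0 \<Longrightarrow> l \<in> C"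
  proof -
    fix j l assume "j \<in> C" "l < N" "a j l \<noteq> 0"
    then have "R j l" using a01 unfolding R_def C_def by auto
    then show "l \<in> C" using \<open>j \<in> C\<close> \<open>l < N\<close> unfolding C_def
      by (auto intro: rtranclp.rtrancl_into_rtrancl)
  qed
  have clos2: "\<And>j l. l \<in> C \<Longrightarrow> j < N \<Longrightarrow> a j l \<noteq> 0 \<Longrightarrow> j \<in> C"
  proof -
    fix j l assume "l \<in> C" "j < N" "a j l \<noteq> 0"
    then have "a l j \<noteq> 0" using sym by (auto simp: C_def)
    then show "j \<in> C" using clos1 \<open>l \<in> C\<close> \<open>j < N\<close> by blast
  qed
  define w where "w = (\<lambda>j. if j \<in> C then v j else 0)"
  have weig: "\<forall>i<N. \<mu> * w i = (\<Sum>j<N. a i j * (w i - w j)) + d i * w i"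
  proof (intro allI impI)
    fix i assume iN: "i < N"
    show "\<mu> * w i = (\<Sum>j<N. a i j * (w i - w j)) + d i * w i"
    proof (cases "i \<in> C")
      case True
      have "(\<Sum>j<N. a i j * (w i - w j)) = (\<Sum>j<N. a i j * (v i - v j))"
      proof (rule sum.cong[OF refl])
        fix j assume "j \<in> {..<N}"
        then show "a i j * (w i - w j) = a i j * (v i - v j)"
          using clos1[OF True, of j] True by (cases "a i j = 0") (auto simp: w_def)
      qed
      then show ?thesis using eig iN True by (simp add: w_def)
    next
      case False
      have "(\<Sum>j<N. a i j * (w i - w j)) = 0"
      proof (rule sum.neutral, intro ballI)
        fix j assume "j \<in> {..<N}"
        then show "a i j * (w i - w j) = 0"
          using clos2[of j i] False iN by (cases "a i j = 0") (auto simp: w_def)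
      qed
      then show ?thesis using False by (simp add: w_def)
    qed
  qed
  have wmax: "\<forall>j<N. (w j)\<^sup>2 \<le> (w i0)\<^sup>2"
    using vmax i0C by (auto simp: w_def abs_le_square_iff)
  have wi0: "w i0 \<noteq> 0" using vi0 i0C by (simp add: w_def)
  define Qe where "Qe = (\<Sum>i<N. \<Sum>j<N. a i j * (w i - w j)\<^sup>2) / 2"
  define Qd where "Qd = (\<Sum>i<N. d i * (w i)\<^sup>2)"
  define S where "S = (\<Sum>i<N. (w i)\<^sup>2)"
  have Qe0: "Qe \<ge> 0" unfolding Qe_def using ann by (auto intro!: sum_nonneg)
  have Qd0: "Qd \<ge> 0" unfolding Qd_def using dnn by (auto intro!: sum_nonneg)
  have Spos: "S > 0" unfolding S_def
    by (rule sum_pos2[of _ i0]) (use i0 wi0 in auto)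
  have energy: "\<mu> * S = Qe + Qd"
  proof -
    have "\<mu> * S = (\<Sum>i<N. w i * (\<mu> * w i))"
      unfolding S_def by (simp add: sum_distrib_left power2_eq_square mult.left_commute)
    also have "\<dots> = (\<Sum>i<N. w i * (\<Sum>j<N. a i j * (w i - w j)) + d i * (w i)\<^sup>2)"
    proof (rule sum.cong[OF refl])
      fix i assume "i \<in> {..<N}"
      then have "\<mu> * w i = (\<Sum>j<N. a i j * (w i - w j)) + d i * w i" using weig by simp
      then show "w i * (\<mu> * w i) = w i * (\<Sum>j<N. a i j * (w i - w j)) + d i * (w i)\<^sup>2"
        by (simp add: power2_eq_square algebra_simps)
    qed
    also have "\<dots> = Qe + Qd"
      unfolding Qe_def Qd_def sum.distrib quad_id[OF sym] ..
    finally show ?thesis .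
  qed
  define c where "c = real N * (real N ^ 2 - real N + 4) / 4"
  have N1: "real N \<ge> 1" using i0 by simp
  have "real N ^ 2 - real N + 4 = (real N - 1/2)\<^sup>2 + 15/4" by (simp add: power2_eq_square field_simps)
  moreover have "(real N - 1/2)\<^sup>2 \<ge> 0" by simp
  ultimately have "real N ^ 2 - real N + 4 > 0" by linarith
  then have cpos: "c > 0" unfolding c_def using N1 by simp
  have key: "S \<le> c * (Qe + Qd)"
  proof (cases "\<exists>k\<in>C. d k = 1")
    case True
    then obtain k where k: "k \<in> C" "d k = 1" by auto
    then have "R\<^sup>*\<^sup>* i0 k" by (simp add: C_def)
    then obtain p l where p: "p 0 = i0" "p l = k" "\<forall>s<l. R (p s) (p (Suc s))" "\<forall>s\<le>l. p s < N"
      "inj_on p {..l}" "l + 1 \<le> N"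
      using get_path[OF \<open>R\<^sup>*\<^sup>* i0 k\<close> RN i0(1)] by blast
    define T where "T = (\<Sum>t<l. (w (p t) - w (p (Suc t)))\<^sup>2)"
    have T0: "T \<ge> 0" unfolding T_def by (auto intro!: sum_nonneg)
    have TQ: "T \<le> Qe" unfolding T_def Qe_def
      by (rule path_edges[OF sym ann p(4) p(5)]) (use p(3) in \<open>auto simp: R_def\<close>)
    have kN: "k < N" using k by (simp add: C_def)
    have "d k * (w k)\<^sup>2 \<le> Qd" unfolding Qd_def
      by (rule member_le_sum) (use dnn kN in auto)
    then have TtQ: "T + (w k)\<^sup>2 \<le> Qe + Qd" using TQ k by simp
    have ps: "\<forall>s\<le>l. (w (p s))\<^sup>2 \<le> real (l - s + 1) * (T + (w k)\<^sup>2)"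
    proof (intro allI impI)
      fix s assume "s \<le> l"
      have "(w (p s) - w (p l))\<^sup>2 \<le> real (l - s) * T"
        unfolding T_def by (rule tele_sq) fact
      from sq_shift[OF this T0, of "w k"] show "(w (p s))\<^sup>2 \<le> real (l - s + 1) * (T + (w k)\<^sup>2)"
        using p(2) by simp
    qed
    define Pset where "Pset = p ` {..l}"
    have PsetN: "Pset \<subseteq> {..<N}" using p(4) by (auto simp: Pset_def)
    have cardP: "card Pset = l + 1" using card_image[OF p(5)] by (simp add: Pset_def)
    have "S = (\<Sum>j\<in>Pset. (w j)\<^sup>2) + (\<Sum>j\<in>{..<N} - Pset. (w j)\<^sup>2)"
      unfolding S_def using sum.subset_diff[OF PsetN finite_lessThan, of "\<lambda>j. (w j)\<^sup>2"] by simp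
    moreover have "(\<Sum>j\<in>Pset. (w j)\<^sup>2) \<le> (T + (w k)\<^sup>2) * (real (l + 1) * real (l + 2) / 2)"
    proof -
      have "(\<Sum>j\<in>Pset. (w j)\<^sup>2) = (\<Sum>s\<le>l. (w (p s))\<^sup>2)"
        unfolding Pset_def by (rule sum.reindex[OF p(5), unfolded comp_def])
      also have "\<dots> \<le> (\<Sum>s\<le>l. real (l - s + 1) * (T + (w k)\<^sup>2))"
        using ps by (auto intro!: sum_mono)
      also have "\<dots> = (T + (w k)\<^sup>2) * (real (l + 1) * real (l + 2) / 2)"
        unfolding sum_distrib_right[symmetric] gauss_rev by (rule mult.commute)
      finally show ?thesis .
    qed
    moreover have "(\<Sum>j\<in>{..<N} - Pset. (w j)\<^sup>2) \<le> real (N - (l + 1)) * (real (l + 1) * (T + (w k)\<^sup>2))"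
    proof -
      have "(w i0)\<^sup>2 \<le> real (l + 1) * (T + (w k)\<^sup>2)" using spec[OF ps, of 0] p(1) by simp
      then have bnd: "\<forall>j\<in>{..<N} - Pset. (w j)\<^sup>2 \<le> real (l + 1) * (T + (w k)\<^sup>2)"
        using wmax by auto
      have "(\<Sum>j\<in>{..<N} - Pset. (w j)\<^sup>2) \<le> real (card ({..<N} - Pset)) * (real (l + 1) * (T + (w k)\<^sup>2))"
        by (rule sum_bounded_above) (rule bnd[rule_format])
      moreover have "card ({..<N} - Pset) = N - (l + 1)"
        using card_Diff_subset[OF finite_subset[OF PsetN] PsetN] cardP by simp
      ultimately show ?thesis by simp
    qed
    moreover have "(T + (w k)\<^sup>2) * (real (l + 1) * real (l + 2) / 2 + real (N - (l + 1)) * real (l + 1))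
       = (T + (w k)\<^sup>2) * (real (l + 1) * real (l + 2) / 2) + real (N - (l + 1)) * (real (l + 1) * (T + (w k)\<^sup>2))"
      by (simp only: distrib_left mult.commute mult.left_commute)
    ultimately have "S \<le> (T + (w k)\<^sup>2) * (real (l + 1) * real (l + 2) / 2 + real (N - (l + 1)) * real (l + 1))"
      by linarith
    moreover have "real (l + 1) * real (l + 2) / 2 + real (N - (l + 1)) * real (l + 1) \<le> c"
    proof -
      define L where "L = real (l + 1)"
      have LN: "L \<le> real N" using p(6) by (simp add: L_def)
      have e: "real (N - (l + 1)) = real N - L" using p(6) by (simp add: L_def of_nat_diff)
      have "L * (L + 1) / 2 + (real N - L) * L \<le> real N * (real N + 1) / 2"
      proof -
        have "real N * (real N + 1) / 2 - (L * (L + 1) / 2 + (real N - L) * L)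
              = ((real N - L)\<^sup>2 + (real N - L)) / 2" by (simp add: power2_eq_square field_simps)
        moreover have "((real N - L)\<^sup>2 + (real N - L)) / 2 \<ge> 0" using LN by simp
        ultimately show ?thesis by linarith
      qed
      moreover have "real N * (real N + 1) / 2 \<le> c"
      proof -
        have "c - real N * (real N + 1) / 2 = real N * ((real N - 1) * (real N - 2)) / 4"
          unfolding c_def by (simp add: power2_eq_square field_simps)
        moreover have "(real N - 1) * (real N - 2) \<ge> 0"
        proof (cases "N = 1")
          case True then show ?thesis by simp
        next
          case False then have "real N \<ge> 2" using N1 by linarith
          then show ?thesis by simp
        qed
        moreover have "real N * ((real N - 1) * (real N - 2)) / 4 \<ge> 0"
          using N1 \<open>(real N - 1) * (real N - 2) \<ge> 0\<close> by simp
        ultimately show ?thesis by linarith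
      qed
      ultimately show ?thesis unfolding L_def e[unfolded L_def] by (simp add: field_simps)
    qed
    moreover have "T + (w k)\<^sup>2 \<ge> 0" using T0 by simp
    ultimately have "S \<le> (T + (w k)\<^sup>2) * c"
      by (meson mult_left_mono order_trans)
    also have "\<dots> \<le> (Qe + Qd) * c"
      by (rule mult_right_mono[OF TtQ]) (use cpos in simp)
    finally show ?thesis by (simp add: mult.commute)
  next
    case False
    then have d0: "\<forall>k\<in>C. d k = 0" using d01 by auto
    have sumw: "(\<Sum>i<N. w i) = 0"
    proof -
      have "\<mu> * (\<Sum>i<N. w i) = (\<Sum>i<N. \<Sum>j<N. a i j * (w i - w j)) + (\<Sum>i<N. d i * w i)"
        using weig by (simp add: sum_distrib_left sum.distrib)
      moreover have "(\<Sum>i<N. d i * w i) = 0"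
        using d0 by (auto intro!: sum.neutral simp: w_def)
      ultimately show ?thesis using lap_zero[OF sym] mu by simp
    qed
    have "\<exists>k\<in>C. w i0 * w k \<le> 0"
    proof (rule ccontr)
      assume "\<not> ?thesis"
      then have pos: "\<forall>k\<in>C. w i0 * w k > 0" by auto
      have "(\<Sum>k<N. w i0 * w k) > 0"
        by (rule sum_pos2[of _ i0]) (use i0 i0C pos in \<open>auto simp: w_def less_le\<close>)
      moreover have "(\<Sum>k<N. w i0 * w k) = 0" using sumw by (simp add: sum_distrib_left[symmetric])
      ultimately show False by simp
    qed
    then obtain k where k: "k \<in> C" "w i0 * w k \<le> 0" by auto
    then have "R\<^sup>*\<^sup>* i0 k" by (simp add: C_def)
    then obtain p l where p: "p 0 = i0" "p l = k" "\<forall>s<l. R (p s) (p (Suc s))" "\<forall>s\<le>l. p s < N"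
      "inj_on p {..l}" "l + 1 \<le> N"
      using get_path[OF \<open>R\<^sup>*\<^sup>* i0 k\<close> RN i0(1)] by blast
    define T where "T = (\<Sum>t<l. (w (p t) - w (p (Suc t)))\<^sup>2)"
    have T0: "T \<ge> 0" unfolding T_def by (auto intro!: sum_nonneg)
    have TQ: "T \<le> Qe" unfolding T_def Qe_def
      by (rule path_edges[OF sym ann p(4) p(5)]) (use p(3) in \<open>auto simp: R_def\<close>)
    have "(w i0)\<^sup>2 \<le> (w i0 - w k)\<^sup>2" using k(2) zero_le_power2[of "w k"] unfolding power2_diff by linarith
    also have "\<dots> \<le> real l * T" using tele_sq[of 0 l w p] p(1,2) by (simp add: T_def)
    finally have m: "(w i0)\<^sup>2 \<le> real l * T" .
    have "S \<le> real (card {..<N}) * (w i0)\<^sup>2"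
      unfolding S_def by (rule sum_bounded_above) (use wmax in auto)
    also have "\<dots> \<le> real N * (real l * T)" using m N1 by simp
    also have "\<dots> \<le> real N * (real N - 1) * Qe"
    proof -
      have "real l \<le> real N - 1" using p(6) by simp
      then have "real l * T \<le> (real N - 1) * Qe"
        using mult_mono[OF \<open>real l \<le> real N - 1\<close> TQ _ T0] N1 by simp
      then show ?thesis using N1 by (simp add: mult.assoc mult_left_mono)
    qed
    also have "\<dots> \<le> c * Qe"
    proof (rule mult_right_mono[OF _ Qe0])
      have "c - real N * (real N - 1) = real N * ((real N - 5/2)\<^sup>2 + 7/4) / 4"
        unfolding c_def by (simp add: power2_eq_square field_simps)
      moreover have "real N * ((real N - 5/2)\<^sup>2 + 7/4) / 4 \<ge> 0" using N1 by simp
      ultimately show "real N * (real N - 1) \<le> c" by linarith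
    qed
    also have "\<dots> \<le> c * (Qe + Qd)" using Qd0 cpos by (intro mult_left_mono) auto
    finally show ?thesis .
  qed
  have "S \<le> c * \<mu> * S" using key energy by (simp add: mult.assoc)
  then have "1 * S \<le> (c * \<mu>) * S" by simp
  then have "1 \<le> c * \<mu>" using mult_le_cancel_right_pos[OF Spos] by blast
  then have "1 / c \<le> \<mu>" using cpos by (simp add: divide_simps mult.commute)
  then show ?thesis unfolding c_def by simp
qed


lemma sum_shift1: "(\<Sum>l=1..N. f l) = (\<Sum>j<N. f (Suc j) :: real)"
  by (induction N) (auto simp: sum.atLeast_Suc_atMost)

lemma H_row:
  fixes F :: "(nat \<times> nat) set" and v :: "real vec"
  assumes iN: "i < N" and noloop: "(Suc i, Suc i) \<notin> F" and v: "v \<in> carrier_vec N"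
  shows "(H_mat N F *\<^sub>v v) $ i =
    (\<Sum>j<N. adj F (Suc i) (Suc j) * (v $ i - v $ j)) + adj F (Suc i) 0 * v $ i"
proof -
  define a where "a = (\<lambda>j. adj F (Suc i) (Suc j))"
  define X where "X = (\<Sum>l=1..N. adj F (Suc i) l) + adj F (Suc i) 0"
  have aii: "a i = 0" using noloop by (simp add: a_def adj_def)
  have X: "X = (\<Sum>j<N. a j) + adj F (Suc i) 0" unfolding X_def a_def sum_shift1 by simp
  have "(H_mat N F *\<^sub>v v) $ i = (\<Sum>j<N. (if i = j then X else - a j) * v $ j)"
    using iN v unfolding H_mat_def laplacian_mat_def leader_diag_def
    by (auto simp: scalar_prod_def X_def a_def lessThan_atLeast0 intro!: sum.cong)
  also have "\<dots> = (\<Sum>j<N. (if j = i then X * v $ j else 0) - a j * v $ j)"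
    by (rule sum.cong[OF refl]) (auto simp: aii)
  also have "\<dots> = X * v $ i - (\<Sum>j<N. a j * v $ j)"
    using iN by (simp add: sum_subtractf)
  also have "\<dots> = (\<Sum>j<N. a j * (v $ i - v $ j)) + adj F (Suc i) 0 * v $ i"
  proof -
    have "(\<Sum>j<N. a j * (v $ i - v $ j)) = (\<Sum>j<N. a j) * v $ i - (\<Sum>j<N. a j * v $ j)"
      by (simp add: right_diff_distrib sum_subtractf sum_distrib_right)
    moreover have "X * v $ i = (\<Sum>j<N. a j) * v $ i + adj F (Suc i) 0 * v $ i"
      unfolding X by (simp add: distrib_right)
    ultimately show ?thesis by linarith
  qed
  finally show ?thesis by (simp add: a_def)
qed

theorem lemma4:
  fixes N n0 :: nat and \<sigma> :: "real \<Rightarrow> nat" and E :: "nat \<Rightarrow> (nat \<times> nat) set"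
  assumes sigma_range: "\<forall>t\<ge>0. \<sigma> t \<in> {1..n0}"
    and sigma_pc: "piecewise_constant \<sigma>"
    and graphs: "\<forall>p\<in>{1..n0}. E p \<subseteq> {(j, i). j \<le> N \<and> i \<le> N \<and> j \<noteq> i}"
    and undirected: "\<forall>t\<ge>0. \<forall>i\<in>{1..N}. \<forall>j\<in>{1..N}. (j, i) \<in> E (\<sigma> t) \<longleftrightarrow> (i, j) \<in> E (\<sigma> t)"
  shows "\<forall>t\<ge>0. \<forall>\<mu>. eigenvalue (H_mat N (E (\<sigma> t))) \<mu> \<and> \<mu> \<noteq> 0 \<longrightarrow>
           \<mu> \<ge> 4 / (real N * (real N ^ 2 - real N + 4))"
proof (intro allI impI)
  fix t :: real and \<mu> :: real
  assume t: "t \<ge> 0" and ev: "eigenvalue (H_mat N (E (\<sigma> t))) \<mu> \<and> \<mu> \<noteq> 0"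
  define F where "F = E (\<sigma> t)"
  have Fsub: "F \<subseteq> {(j, i). j \<le> N \<and> i \<le> N \<and> j \<noteq> i}"
    using graphs sigma_range t by (auto simp: F_def)
  have und: "\<forall>i\<in>{1..N}. \<forall>j\<in>{1..N}. (j, i) \<in> F \<longleftrightarrow> (i, j) \<in> F"
    using undirected t by (simp add: F_def)
  have dimA: "dim_row (H_mat N F) = N"
    by (simp add: H_mat_def laplacian_mat_def leader_diag_def)
  obtain v where v: "v \<in> carrier_vec N" "v \<noteq> 0\<^sub>v N" "H_mat N F *\<^sub>v v = \<mu> \<cdot>\<^sub>v v"
    using ev dimA unfolding eigenvalue_def eigenvector_def F_def by metis
  define a where "a = (\<lambda>i j. adj F (Suc i) (Suc j))"
  define d where "d = (\<lambda>i. adj F (Suc i) 0)"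
  have a01: "\<forall>i j. a i j = 0 \<or> a i j = 1" by (simp add: a_def adj_def)
  have d01: "\<forall>i. d i = 0 \<or> d i = 1" by (simp add: d_def adj_def)
  have sym: "\<forall>i<N. \<forall>j<N. a i j = a j i"
  proof (intro allI impI)
    fix i j assume "i < N" "j < N"
    then have "Suc i \<in> {1..N}" "Suc j \<in> {1..N}" by auto
    then show "a i j = a j i" using und by (simp add: a_def adj_def)
  qed
  have eig: "\<forall>i<N. \<mu> * v $ i = (\<Sum>j<N. a i j * (v $ i - v $ j)) + d i * v $ i"
  proof (intro allI impI)
    fix i assume iN: "i < N"
    have "(Suc i, Suc i) \<notin> F" using Fsub by auto
    from H_row[OF iN this v(1)] have "(H_mat N F *\<^sub>v v) $ i =
      (\<Sum>j<N. a i j * (v $ i - v $ j)) + d i * v $ i" by (simp add: a_def d_def)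
    moreover have "(H_mat N F *\<^sub>v v) $ i = \<mu> * v $ i" using v(1,3) iN by simp
    ultimately show "\<mu> * v $ i = (\<Sum>j<N. a i j * (v $ i - v $ j)) + d i * v $ i" by simp
  qed
  have nz: "\<exists>i<N. v $ i \<noteq> 0"
  proof (rule ccontr)
    assume "\<not> ?thesis"
    then have "v = 0\<^sub>v N" using v(1) by (intro eq_vecI) auto
    then show False using v(2) by simp
  qed
  from core[where a=a and N=N and d=d and v="\<lambda>j. v $ j" and \<mu>=\<mu>, OF a01 sym d01 eig nz] ev
  show "\<mu> \<ge> 4 / (real N * (real N ^ 2 - real N + 4))" by simp
qed

end
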